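(* Let $E$ be a Borel space and consider the setting of the context. For each stopping time $\tau$, the induced policy $\pi_\tau=\{d^\tau_n,n\ge0\}$ belongs to $\Pi^0_{DH}$, i.e. each $d^\tau_n:\mathbb{R}\times\hat H_n\to A$ is measurable with $d^\tau_n(s,\hat h_n)\in A(x_n)$, and $d^\tau_n(0,\hat h_n)=0$ for all $\hat h_n\in H^0_n$.
   Context: $\Omega=\{(x_0,t_1,x_1,t_2,x_2,\dots): x_0\in E,(t_n,x_n)\in\mathbb{R}_+\times E\}$ with product Borel $\sigma$-algebra; $X_n(\omega)=x_n$, $T_0=0$, $T_{n+1}(\omega)=t_{n+1}$, $Y_n(\omega)=(x_0,t_1,x_1,\dots,t_n,x_n)$, $\mathcal{F}_n=\sigma(T_0,X_0,\dots,T_n,X_n)$. A stopping time is $\tau:\Omega\to\{0,1,2,\dots\}\cup\{+\infty\}$ with $\{\tau=n\}\in\mathcal{F}_n$ for all $n$. Decision model: $\hat E=E\cup\{\Delta\}$, $A=\{0,1\}$, $A(x)=\{0,1\}$ for $x\in E$, $A(\Delta)=\{1\}$; $\hat H_n$ is the set of histories $\hat h_n=(x_0,a_0,t_1,x_1,\dots,a_{n-1},t_n,x_n)$ with $x_m\in\hat E$, $a_m\in A(x_m)$, $t_m\in\mathbb{R}_+$; $H^0_n=E\times(\{0\}\times\mathbb{R}_+\times E)^n\subset\hat H_n$. A deterministic policy is a sequence $\{d_n\}$ of measurable $d_n:\mathbb{R}\times\hat H_n\to A$ with $d_n(s,\hat h_n)\in A(x_n)$; $\Pi^0_{DH}$ is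 the set of deterministic policies with $d_n(0,\hat h_n)=0$ for all $n$ and $\hat h_n\in H^0_n$. Induced policy: $B^\tau_n=\{Y_n(\omega):\omega\in\{\tau=n\}\}$; for $\hat h_n\in\hat H_n$ and $s\in\mathbb{R}$, $d^\tau_n(s,\hat h_n)=\mathbf{1}_{B^\tau_n}(x_0,t_1,x_1,\dots,t_n,x_n)\mathbf{1}_{(0,\infty)}(s)$ if $\hat h_n\in H^0_n$, and $d^\tau_n(s,\hat h_n)=1$ if $\hat h_n\in\hat H_n\setminus H^0_n$; $\pi_\tau=\{d^\tau_n\}$. *)

theory Defs
  imports "HOL-Analysis.Analysis" "HOL-Library.Extended_Nat"
begin

text \<open>The state space E is a Borel space: a Borel subset S of a Polish space,
  with the (trace of the) Borel sigma-algebra.\<close>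
definition EM :: "'e::polish_space set \<Rightarrow> 'e measure" where
  "EM S = restrict_space borel S"

text \<open>Sample space Omega = E x (R_+ x E)^N; omega = (x0, g) with g k = (t_(k+1), x_(k+1)).\<close>
definition OmegaM :: "'e::polish_space set \<Rightarrow> ('e \<times> (nat \<Rightarrow> real \<times> 'e)) measure" where
  "OmegaM S = EM S \<Otimes>\<^sub>M (\<Pi>\<^sub>M k\<in>(UNIV::nat set). (restrict_space borel {0..} \<Otimes>\<^sub>M EM S))"

text \<open>Y_n(omega) = (x0, t1, x1, ..., tn, xn), valued in E x (R_+ x E)^n.\<close>
definition YM :: "'e::polish_space set \<Rightarrow> nat \<Rightarrow> ('e \<times> (nat \<Rightarrow> real \<times> 'e)) measure" where
  "YM S n = EM S \<Otimes>\<^sub>M (\<Pi>\<^sub>M k\<in>{..<n}. (restrict_space borel {0..} \<Otimes>\<^sub>M EM S))"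

definition Y :: "nat \<Rightarrow> ('e \<times> (nat \<Rightarrow> real \<times> 'e)) \<Rightarrow> ('e \<times> (nat \<Rightarrow> real \<times> 'e))" where
  "Y n \<omega> = (fst \<omega>, restrict (snd \<omega>) {..<n})"

definition FF :: "'e::polish_space set \<Rightarrow> nat \<Rightarrow> ('e \<times> (nat \<Rightarrow> real \<times> 'e)) measure" where
  "FF S n = vimage_algebra (space (OmegaM S)) (Y n) (YM S n)"

definition stopping_time_seq :: "'e::polish_space set \<Rightarrow> (('e \<times> (nat \<Rightarrow> real \<times> 'e)) \<Rightarrow> enat) \<Rightarrow> bool" where
  "stopping_time_seq S \<tau> \<longleftrightarrow>
     (\<forall>n::nat. {\<omega> \<in> space (OmegaM S). \<tau> \<omega> = enat n} \<in> sets (FF S n))"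

text \<open>Extended state space E-hat = E \<union> {Delta}; Delta is None.\<close>
definition hatEM :: "'e::polish_space set \<Rightarrow> 'e option measure" where
  "hatEM S = sigma (insert None (Some ` S)) (insert {None} ((`) Some ` sets (EM S)))"

definition AM :: "nat measure" where
  "AM = count_space {0, 1}"

definition Aset :: "'e option \<Rightarrow> nat set" where
  "Aset x = (if x = None then {1} else {0, 1})"

text \<open>A history h_n = (x0, a0, t1, x1, ..., a_(n-1), t_n, x_n) is represented as
  (x0, f) with f m = (a_m, t_(m+1), x_(m+1)) for m < n.\<close>
type_synonym 'e hist = "'e option \<times> (nat \<Rightarrow> nat \<times> real \<times> 'e option)"

definition hstate :: "'e hist \<Rightarrow> nat \<Rightarrow> 'e option" where
  "hstate h m = (if m = 0 then fst h else snd (snd (snd h (m - 1))))"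

definition HhatM :: "'e::polish_space set \<Rightarrow> nat \<Rightarrow> 'e hist measure" where
  "HhatM S n = restrict_space
     (hatEM S \<Otimes>\<^sub>M (\<Pi>\<^sub>M m\<in>{..<n}. (AM \<Otimes>\<^sub>M (borel \<Otimes>\<^sub>M hatEM S))))
     {h. \<forall>m<n. fst (snd h m) \<in> Aset (hstate h m) \<and> 0 \<le> fst (snd (snd h m))}"

text \<open>H^0_n = E x ({0} x R_+ x E)^n inside Hhat_n.\<close>
definition H0 :: "'e::polish_space set \<Rightarrow> nat \<Rightarrow> 'e hist set" where
  "H0 S n = {h \<in> space (HhatM S n). fst h \<in> Some ` S \<and>
      (\<forall>m<n. fst (snd h m) = 0 \<and> snd (snd (snd h m)) \<in> Some ` S)}"

definition det_policy :: "'e::polish_space set \<Rightarrow> (nat \<Rightarrow> real \<times> 'e hist \<Rightarrow> nat) \<Rightarrow> bool" where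
  "det_policy S d \<longleftrightarrow> (\<forall>n. d n \<in> (borel \<Otimes>\<^sub>M HhatM S n) \<rightarrow>\<^sub>M AM \<and>
      (\<forall>s h. h \<in> space (HhatM S n) \<longrightarrow> d n (s, h) \<in> Aset (hstate h n)))"

definition Pi0_DH :: "'e::polish_space set \<Rightarrow> (nat \<Rightarrow> real \<times> 'e hist \<Rightarrow> nat) set" where
  "Pi0_DH S = {d. det_policy S d \<and> (\<forall>n. \<forall>h \<in> H0 S n. d n (0, h) = 0)}"

definition Bset :: "'e::polish_space set \<Rightarrow> (('e \<times> (nat \<Rightarrow> real \<times> 'e)) \<Rightarrow> enat) \<Rightarrow> nat
    \<Rightarrow> ('e \<times> (nat \<Rightarrow> real \<times> 'e)) set" where
  "Bset S \<tau> n = Y n ` {\<omega> \<in> space (OmegaM S). \<tau> \<omega> = enat n}"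

definition strip :: "nat \<Rightarrow> 'e hist \<Rightarrow> ('e \<times> (nat \<Rightarrow> real \<times> 'e))" where
  "strip n h = (the (fst h), \<lambda>m\<in>{..<n}. (fst (snd (snd h m)), the (snd (snd (snd h m)))))"

definition induced_policy :: "'e::polish_space set \<Rightarrow> (('e \<times> (nat \<Rightarrow> real \<times> 'e)) \<Rightarrow> enat)
    \<Rightarrow> nat \<Rightarrow> real \<times> 'e hist \<Rightarrow> nat" where
  "induced_policy S \<tau> n = (\<lambda>(s, h).
     if h \<in> H0 S n then indicator (Bset S \<tau> n) (strip n h) * indicator {0<..} s else 1)"

end

theory Submission imports Defs begin

lemma space_EM[simp]: "space (EM S) = S" by (simp add: EM_def space_restrict_space)

lemma hat_gen: "insert {None} ((`) Some ` sets (EM S)) \<subseteq> Pow (insert None (Some ` S))"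
  using sets.sets_into_space[of _ "EM S"] by auto

lemma space_hatEM[simp]: "space (hatEM S) = insert None (Some ` S)"
  unfolding hatEM_def using hat_gen by (simp add: space_measure_of_conv)

lemma sets_hatEM: "sets (hatEM S) = sigma_sets (insert None (Some ` S)) (insert {None} ((`) Some ` sets (EM S)))"
  unfolding hatEM_def by (rule sets_measure_of[OF hat_gen])

lemma Some_sets: "A \<in> sets (EM S) \<Longrightarrow> Some ` A \<in> sets (hatEM S)"
  unfolding sets_hatEM by (rule sigma_sets.Basic) auto

lemma SomeS_sets: "Some ` S \<in> sets (hatEM S)"
  using Some_sets[of S S] sets.top[of "EM S"] by simp

lemma the_meas: "the \<in> restrict_space (hatEM S) (Some ` S) \<rightarrow>\<^sub>M EM S"
proof (rule measurableI)
  fix x assume "x \<in> space (restrict_space (hatEM S) (Some ` S))"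
  then show "the x \<in> space (EM S)" by (auto simp: space_restrict_space)
next
  fix A assume A: "A \<in> sets (EM S)"
  have "the -` A \<inter> space (restrict_space (hatEM S) (Some ` S)) = Some ` A"
    using sets.sets_into_space[OF A] by (auto simp: space_restrict_space)
  moreover have "Some ` A \<in> sets (restrict_space (hatEM S) (Some ` S))"
    using sets.sets_into_space[OF A] Some_sets[OF A] SomeS_sets
    by (subst sets_restrict_space_iff) auto
  ultimately show "the -` A \<inter> space (restrict_space (hatEM S) (Some ` S)) \<in> sets (restrict_space (hatEM S) (Some ` S))" by simp
qed

lemma H0_sets: "H0 S n \<in> sets (HhatM S n)"
proof -
  have [measurable]: "Some ` S \<in> sets (hatEM S)" by (rule SomeS_sets)
  have "Measurable.pred (HhatM S n) (\<lambda>h. fst h \<in> Some ` S \<and>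
      (\<forall>m<n. fst (snd h m) = 0 \<and> snd (snd (snd h m)) \<in> Some ` S))"
    unfolding HhatM_def AM_def
    by (rule measurable_restrict_space1) measurable
  then show ?thesis unfolding H0_def pred_def by simp
qed

lemma strip_meas: "strip n \<in> restrict_space (HhatM S n) (H0 S n) \<rightarrow>\<^sub>M YM S n"
proof -
  let ?M = "restrict_space (HhatM S n) (H0 S n)"
  have spM: "space ?M = H0 S n" by (rule space_restrict_space2[OF H0_sets])
  have base: "(\<lambda>h. h) \<in> ?M \<rightarrow>\<^sub>M hatEM S \<Otimes>\<^sub>M (\<Pi>\<^sub>M m\<in>{..<n}. (AM \<Otimes>\<^sub>M (borel \<Otimes>\<^sub>M hatEM S)))"
    unfolding HhatM_def
    by (intro measurable_restrict_space1) simp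
  have f1: "fst \<in> ?M \<rightarrow>\<^sub>M restrict_space (hatEM S) (Some ` S)"
    apply (rule measurable_restrict_space2)
    using spM apply (auto simp: H0_def)[1]
    using measurable_compose[OF base measurable_fst] by simp
  have f2: "(\<lambda>h. snd (snd (snd h m))) \<in> ?M \<rightarrow>\<^sub>M restrict_space (hatEM S) (Some ` S)" if m: "m < n" for m
    apply (rule measurable_restrict_space2)
    using spM m apply (auto simp: H0_def)[1]
    apply (rule measurable_compose[OF base, of "\<lambda>h. snd (snd (snd h m))"])
    using m by measurable (simp add: m)
  have f3: "(\<lambda>h. fst (snd (snd h m))) \<in> ?M \<rightarrow>\<^sub>M restrict_space borel {0..}" if m: "m < n" for m
    apply (rule measurable_restrict_space2)
    using spM m apply (auto simp: H0_def HhatM_def space_restrict_space)[1]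
    apply (rule measurable_compose[OF base, of "\<lambda>h. fst (snd (snd h m))"])
    using m by measurable (simp add: m)
  show ?thesis
    unfolding strip_def YM_def
    apply (rule measurable_Pair)
    using measurable_compose[OF f1 the_meas] apply simp
    apply (rule measurable_restrict)
    apply (rule measurable_Pair)
    using f3 apply simp
    using measurable_compose[OF f2 the_meas] by simp
qed

lemma space_Omega: "space (OmegaM S) = S \<times> (UNIV \<rightarrow>\<^sub>E ({0..} \<times> S))"
  by (simp add: OmegaM_def space_pair_measure space_PiM space_restrict_space)

lemma space_YM: "space (YM S n) = S \<times> ({..<n} \<rightarrow>\<^sub>E ({0..} \<times> S))"
  by (simp add: YM_def space_pair_measure space_PiM space_restrict_space)

lemma Y_meas_space: "Y n \<in> space (OmegaM S) \<rightarrow> space (YM S n)"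
  by (auto simp: space_Omega space_YM Y_def PiE_iff)

theorem lemma4p3:
  fixes S :: "'e::polish_space set"
    and \<tau> :: "('e \<times> (nat \<Rightarrow> real \<times> 'e)) \<Rightarrow> enat"
  assumes "S \<in> sets borel"
    and "stopping_time_seq S \<tau>"
  shows "induced_policy S \<tau> \<in> Pi0_DH S"
proof -
  have main: "induced_policy S \<tau> n \<in> (borel \<Otimes>\<^sub>M HhatM S n) \<rightarrow>\<^sub>M AM" for n
  proof -
    have "{\<omega> \<in> space (OmegaM S). \<tau> \<omega> = enat n} \<in> sets (FF S n)"
      using assms(2) unfolding stopping_time_seq_def by blast
    then obtain C where C: "C \<in> sets (YM S n)"
      and Ceq: "{\<omega> \<in> space (OmegaM S). \<tau> \<omega> = enat n} = Y n -` C \<inter> space (OmegaM S)"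
      unfolding FF_def sets_vimage_algebra2[OF Y_meas_space] by blast
    have key: "y \<in> Bset S \<tau> n \<longleftrightarrow> y \<in> C" if y: "y \<in> space (YM S n)" for y
    proof
      assume "y \<in> Bset S \<tau> n"
      then show "y \<in> C" unfolding Bset_def using Ceq by auto
    next
      assume yC: "y \<in> C"
      define \<omega> where "\<omega> = (fst y, \<lambda>k. if k < n then snd y k else (0::real, fst y))"
      have om: "\<omega> \<in> space (OmegaM S)"
        using y unfolding space_Omega space_YM \<omega>_def by (auto simp: PiE_def Pi_def)
      have Yom: "Y n \<omega> = y"
        using y unfolding space_YM \<omega>_def Y_def
        by (cases y) (auto simp: restrict_def PiE_def extensional_def fun_eq_iff)
      have "\<omega> \<in> {\<omega> \<in> space (OmegaM S). \<tau> \<omega> = enat n}"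
        unfolding Ceq using om Yom yC by simp
      then show "y \<in> Bset S \<tau> n" unfolding Bset_def using Yom by force
    qed
    let ?M = "restrict_space (HhatM S n) (H0 S n)"
    have spM: "space ?M = H0 S n" by (rule space_restrict_space2[OF H0_sets])
    define D where "D = {h \<in> H0 S n. strip n h \<in> C}"
    have "strip n -` C \<inter> space ?M \<in> sets ?M"
      using measurable_sets[OF strip_meas C] .
    then have "strip n -` C \<inter> H0 S n \<in> sets (HhatM S n)"
      unfolding spM
    proof -
      assume a: "strip n -` C \<inter> H0 S n \<in> sets ?M"
      have hh: "H0 S n \<inter> space (HhatM S n) \<in> sets (HhatM S n)"
        using H0_sets[of S n] sets.Int_space_eq2[OF H0_sets[of S n]] by simp
      show ?thesis using a sets_restrict_space_iff[OF hh] by blast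
    qed
    moreover have "strip n -` C \<inter> H0 S n = D" unfolding D_def by auto
    ultimately have Dsets[measurable]: "D \<in> sets (HhatM S n)" by simp
    have H0m[measurable]: "H0 S n \<in> sets (HhatM S n)" by (rule H0_sets)
    have eq: "induced_policy S \<tau> n x = (if snd x \<in> H0 S n then (if snd x \<in> D \<and> 0 < fst x then 1 else 0) else 1)"
      for x
    proof -
      obtain s h where Pair: "x = (s, h)" by (cases x)
      show ?thesis
      proof (cases "h \<in> H0 S n")
        case True
        have "strip n h \<in> space (YM S n)"
          using measurable_space[OF strip_meas[of n S], of h] True spM by simp
        then show ?thesis using True key Pair by (auto simp: induced_policy_def D_def indicator_def)
      qed (auto simp: induced_policy_def Pair)
    qed
    show ?thesis
      unfolding eq[abs_def] AM_def by measurable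
  qed
  show ?thesis
    unfolding Pi0_DH_def det_policy_def
  proof (intro CollectI conjI allI impI ballI)
    fix n show "induced_policy S \<tau> n \<in> (borel \<Otimes>\<^sub>M HhatM S n) \<rightarrow>\<^sub>M AM" by (rule main)
  next
    fix n s h assume "h \<in> space (HhatM S n)"
    have "hstate h n \<noteq> None" if "h \<in> H0 S n"
    proof (cases "n = 0")
      case False
      then have "n - 1 < n" by simp
      then show ?thesis using that False unfolding H0_def hstate_def by fastforce
    qed (use that in \<open>auto simp: H0_def hstate_def\<close>)
    then show "induced_policy S \<tau> n (s, h) \<in> Aset (hstate h n)"
      by (auto simp: induced_policy_def Aset_def indicator_def)
  next
    fix n h assume "h \<in> H0 S n"
    then show "induced_policy S \<tau> n (0, h) = 0"
      by (simp add: induced_policy_def)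
  qed
qed

end
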